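(* Let $\mathbb{A}=(A,\backslash,/)$ be a residuation algebra. If $\mathbb{A}$ satisfies $a\backslash(b\vee c)\leq(a\backslash b)\vee(a\backslash c)$ for all $a,b,c\in A$, then the dual structure $\mathbb{A}^\delta_+$ is functional, i.e. for all $y,z\in J^\infty(A^\delta)$, $y\cdot z\in J^\infty(A^\delta)\cup\{\bot\}$.
   Context: A residuation algebra is a structure $(A,\backslash,/)$ where $A$ is a bounded distributive lattice and $\backslash,/$ are binary operations on $A$ such that $\backslash$ preserves finite (including empty) meets in its second coordinate, $/$ preserves finite (including empty) meets in its first coordinate, and for all $a,b,c\in A$: $b\leq a\backslash c$ iff $a\leq c/b$. The canonical extension $A^\delta$ of $A$ is the complete lattice containing $A$ as a sublattice that is dense (every element is a join of meets and a meet of joins of elements of $A$) and compact (if $\bigwedge S\leq\bigvee T$ for $S,T\subseteq A$ then this holds for some finite subsets). Let $K(A^\delta)$ (resp. $O(A^\delta)$) be the set of meets (resp. joins) of subsets of $A$. The $\pi$-extension of $\backslash$ is defined by: for $k\in K(A^\delta)$, $o\in O(A^\delta)$, $k\backslash^\pi o=\bigvee\{a\backslash b\mid a,b\in A,\ k\leq a,\ b\leq o\}$, and for arbitrary $u,v\in A^\delta$, $u\backslash^\pi v=\bigwedge\{k\backslash^\pi o\mid k\in K(A^\delta),\ o\in O(A^\delta),\ k\leq u,\ v\leq o\}$; the $\pi$-extension $/^\pi$ of $/$ is defined symmetrically ($/$ being monotone in its first and antitone in its second coordinate). There is a binary operation $\cdot$ on $A^\delta$, completely join-preserving in each coordinate,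 such that for all $u,v,w\in A^\delta$: $v\leq u\backslash^\pi w$ iff $u\cdot v\leq w$ iff $u\leq w/^\pi v$. $J^\infty(A^\delta)$ is the set of completely join-irreducible elements of $A^\delta$ (those $x$ with $x=\bigvee S\Rightarrow x\in S$ for all $S\subseteq A^\delta$). The dual structure $\mathbb{A}^\delta_+$ is $(J^\infty(A^\delta),\geq,R)$ with $R(x,y,z)$ iff $x\leq y\cdot z$; it is called functional if $y\cdot z\in J^\infty(A^\delta)\cup\{\bot\}$ for all $y,z\in J^\infty(A^\delta)$. *)

theory Defs
  imports Main
begin

text \<open>Residuation algebra on a bounded distributive lattice 'a:
  ldiv a c stands for a \ c, rdiv c b stands for c / b.\<close>
definition residuation_algebra ::
  "('a::{distrib_lattice,bounded_lattice} \<Rightarrow> 'a \<Rightarrow> 'a) \<Rightarrow> ('a \<Rightarrow> 'a \<Rightarrow> 'a) \<Rightarrow> bool" where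
  "residuation_algebra ldiv rdiv \<longleftrightarrow>
     (\<forall>a. ldiv a top = top) \<and>
     (\<forall>a b c. ldiv a (inf b c) = inf (ldiv a b) (ldiv a c)) \<and>
     (\<forall>b. rdiv top b = top) \<and>
     (\<forall>a c b. rdiv (inf a c) b = inf (rdiv a b) (rdiv c b)) \<and>
     (\<forall>a b c. b \<le> ldiv a c \<longleftrightarrow> a \<le> rdiv c b)"

definition canonical_extension ::
  "('a::{distrib_lattice,bounded_lattice} \<Rightarrow> 'b::complete_lattice) \<Rightarrow> bool" where
  "canonical_extension e \<longleftrightarrow>
     inj e \<and>
     (\<forall>a b. e (inf a b) = inf (e a) (e b)) \<and>
     (\<forall>a b. e (sup a b) = sup (e a) (e b)) \<and>
     e top = top \<and> e bot = bot \<and>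
     (\<forall>u. \<exists>\<S>. u = Sup ((\<lambda>S. Inf (e ` S)) ` \<S>)) \<and>
     (\<forall>u. \<exists>\<T>. u = Inf ((\<lambda>T. Sup (e ` T)) ` \<T>)) \<and>
     (\<forall>S T. Inf (e ` S) \<le> Sup (e ` T) \<longrightarrow>
        (\<exists>S' T'. finite S' \<and> finite T' \<and> S' \<subseteq> S \<and> T' \<subseteq> T \<and>
                 Inf (e ` S') \<le> Sup (e ` T')))"

definition closed_elems :: "('a \<Rightarrow> 'b::complete_lattice) \<Rightarrow> 'b set" where
  "closed_elems e = {Inf (e ` S) | S. True}"

definition open_elems :: "('a \<Rightarrow> 'b::complete_lattice) \<Rightarrow> 'b set" where
  "open_elems e = {Sup (e ` T) | T. True}"

text \<open>pi-extension of \ (antitone in first, monotone in second argument).\<close>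
definition ldiv_KO :: "('a \<Rightarrow> 'b::complete_lattice) \<Rightarrow> ('a \<Rightarrow> 'a \<Rightarrow> 'a) \<Rightarrow> 'b \<Rightarrow> 'b \<Rightarrow> 'b" where
  "ldiv_KO e ldiv k p = Sup {e (ldiv a b) | a b. k \<le> e a \<and> e b \<le> p}"

definition ldiv_pi :: "('a \<Rightarrow> 'b::complete_lattice) \<Rightarrow> ('a \<Rightarrow> 'a \<Rightarrow> 'a) \<Rightarrow> 'b \<Rightarrow> 'b \<Rightarrow> 'b" where
  "ldiv_pi e ldiv u v = Inf {ldiv_KO e ldiv k p | k p.
      k \<in> closed_elems e \<and> p \<in> open_elems e \<and> k \<le> u \<and> v \<le> p}"

text \<open>pi-extension of / (monotone in first, antitone in second argument).\<close>
definition rdiv_OK :: "('a \<Rightarrow> 'b::complete_lattice) \<Rightarrow> ('a \<Rightarrow> 'a \<Rightarrow> 'a) \<Rightarrow> 'b \<Rightarrow> 'b \<Rightarrow> 'b" where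
  "rdiv_OK e rdiv p k = Sup {e (rdiv a b) | a b. e a \<le> p \<and> k \<le> e b}"

definition rdiv_pi :: "('a \<Rightarrow> 'b::complete_lattice) \<Rightarrow> ('a \<Rightarrow> 'a \<Rightarrow> 'a) \<Rightarrow> 'b \<Rightarrow> 'b \<Rightarrow> 'b" where
  "rdiv_pi e rdiv u v = Inf {rdiv_OK e rdiv p k | p k.
      p \<in> open_elems e \<and> k \<in> closed_elems e \<and> u \<le> p \<and> k \<le> v}"

definition completely_join_irreducible :: "'b::complete_lattice \<Rightarrow> bool" where
  "completely_join_irreducible x \<longleftrightarrow> (\<forall>S. x = Sup S \<longrightarrow> x \<in> S)"

end

theory Submission
  imports Defs
begin

lemma ra_mono2:
  assumes RA: "residuation_algebra ldiv rdiv" and "b \<le> c"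
  shows "ldiv a b \<le> ldiv a c"
proof -
  have "ldiv a (inf b c) = inf (ldiv a b) (ldiv a c)" using RA unfolding residuation_algebra_def by blast
  moreover have "inf b c = b" using assms(2) by (simp add: inf.absorb1)
  ultimately show ?thesis by (metis inf.cobounded2)
qed

lemma ra_anti1:
  assumes RA: "residuation_algebra ldiv rdiv" and "a' \<le> a"
  shows "ldiv a c \<le> ldiv a' c"
proof -
  have iff: "\<And>a b c. b \<le> ldiv a c \<longleftrightarrow> a \<le> rdiv c b" using RA unfolding residuation_algebra_def by blast
  have "a \<le> rdiv c (ldiv a c)" using iff by blast
  then have "a' \<le> rdiv c (ldiv a c)" using assms(2) by (rule order_trans[rotated])
  then show ?thesis using iff by blast
qed

context
  fixes e :: "'a::{distrib_lattice,bounded_lattice} \<Rightarrow> 'b::complete_lattice"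
  assumes CE: "canonical_extension e"
begin

lemma e_inf: "e (inf a b) = inf (e a) (e b)" using CE unfolding canonical_extension_def by blast
lemma e_sup: "e (sup a b) = sup (e a) (e b)" using CE unfolding canonical_extension_def by blast
lemma e_top: "e top = top" using CE unfolding canonical_extension_def by blast
lemma e_bot: "e bot = bot" using CE unfolding canonical_extension_def by blast
lemma e_inj: "inj e" using CE unfolding canonical_extension_def by blast
lemma dens1: "\<exists>\<S>. u = Sup ((\<lambda>S. Inf (e ` S)) ` \<S>)" using CE unfolding canonical_extension_def by blast
lemma dens2: "\<exists>\<T>. u = Inf ((\<lambda>T. Sup (e ` T)) ` \<T>)" using CE unfolding canonical_extension_def by blast
lemma compact: "Inf (e ` S) \<le> Sup (e ` T) \<Longrightarrow>
        (\<exists>S' T'. finite S' \<and> finite T' \<and> S' \<subseteq> S \<and> T' \<subseteq> T \<and>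
                 Inf (e ` S') \<le> Sup (e ` T'))" using CE unfolding canonical_extension_def by blast

lemma e_mono: "a \<le> b \<Longrightarrow> e a \<le> e b"
  by (metis e_inf inf.absorb1 inf.cobounded2)

lemma e_refl: "e a \<le> e b \<Longrightarrow> a \<le> b"
proof -
  assume "e a \<le> e b"
  then have "e (inf a b) = e a" by (simp add: e_inf inf.absorb1)
  then have "inf a b = a" using e_inj by (meson injD)
  then show ?thesis by (metis inf.cobounded2)
qed

lemma fin_sup: "finite T \<Longrightarrow> \<exists>j. e j = Sup (e ` T)"
proof (induction T rule: finite_induct)
  case empty then show ?case using e_bot by auto
next
  case (insert x F)
  then obtain j where "e j = Sup (e ` F)" by blast
  then have "e (sup x j) = Sup (e ` insert x F)" by (simp add: e_sup)
  then show ?case by blast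
qed

lemma filter_lower:
  assumes "top \<in> F" "\<forall>c d. c\<in>F \<longrightarrow> d\<in>F \<longrightarrow> inf c d \<in> F"
  shows "finite F' \<Longrightarrow> F' \<subseteq> F \<Longrightarrow> \<exists>c\<in>F. \<forall>d\<in>F'. (c::'a) \<le> d"
proof (induction F' rule: finite_induct)
  case empty then show ?case using assms(1) by blast
next
  case (insert x G)
  then obtain c where c: "c \<in> F" "\<forall>d\<in>G. c \<le> d" by blast
  have "x \<in> F" using insert by blast
  then have "inf c x \<in> F" using assms(2) c(1) by blast
  moreover have "\<forall>d\<in>insert x G. inf c x \<le> d" using c(2) by (auto intro: le_infI1)
  ultimately show ?case by blast
qed

lemma compactF:
  assumes "top \<in> F" "\<forall>c d. c\<in>F \<longrightarrow> d\<in>F \<longrightarrow> inf c d \<in> F"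
    and "Inf (e ` F) \<le> Sup (e ` T)"
  shows "\<exists>c\<in>F. \<exists>T'. finite T' \<and> T' \<subseteq> T \<and> e c \<le> Sup (e ` T')"
proof -
  obtain S' T' where st: "finite S'" "finite T'" "S' \<subseteq> F" "T' \<subseteq> T" "Inf (e ` S') \<le> Sup (e ` T')"
    using compact[OF assms(3)] by blast
  obtain c where c: "c \<in> F" "\<forall>d\<in>S'. c \<le> d" using filter_lower[OF assms(1,2) st(1,3)] by blast
  have "e c \<le> Inf (e ` S')" using c(2) e_mono by (auto intro: Inf_greatest)
  then show ?thesis using c(1) st by (meson order_trans)
qed

lemma fin_prime:
  assumes prime: "\<forall>c d. k \<le> e (sup c d) \<longrightarrow> k \<le> e c \<or> k \<le> e d" and nb: "k \<noteq> bot"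
  shows "finite W \<Longrightarrow> k \<le> Sup (e ` W) \<Longrightarrow> \<exists>w\<in>W. k \<le> e w"
proof (induction W rule: finite_induct)
  case empty then show ?case using nb by (simp add: bot_unique)
next
  case (insert x F)
  obtain j where j: "e j = Sup (e ` F)" using fin_sup insert(1) by blast
  have "k \<le> e (sup x j)" using insert(4) j by (simp add: e_sup)
  then have "k \<le> e x \<or> k \<le> e j" using prime by blast
  then show ?case using insert j by auto
qed

lemma L2:
  assumes kc: "k = Inf (e ` {c. k \<le> e c})"
    and prime: "\<forall>c d. k \<le> e (sup c d) \<longrightarrow> k \<le> e c \<or> k \<le> e d" and nb: "k \<noteq> bot"
  shows "completely_join_irreducible k"
  unfolding completely_join_irreducible_def
proof (intro allI impI)
  fix S assume kS: "k = Sup S"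
  show "k \<in> S"
  proof (rule ccontr)
    assume nS: "k \<notin> S"
    define W where "W = {a. \<not> k \<le> e a}"
    have "Sup S \<le> Sup (e ` W)"
    proof (rule Sup_least)
      fix s assume sS: "s \<in> S"
      obtain SS where sSS: "s = Sup ((\<lambda>S. Inf (e ` S)) ` SS)" using dens1 by blast
      show "s \<le> Sup (e ` W)"
        unfolding sSS
      proof (rule Sup_least)
        fix q assume "q \<in> (\<lambda>S. Inf (e ` S)) ` SS"
        then obtain U where U: "U \<in> SS" "q = Inf (e ` U)" by blast
        have "q \<le> s" unfolding sSS using U by (auto intro: Sup_upper)
        have "s \<le> k" using kS sS by (simp add: Sup_upper)
        have "\<not> k \<le> q"
        proof
          assume "k \<le> q"
          then have "s = k" using \<open>q \<le> s\<close> \<open>s \<le> k\<close> by simp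
          then show False using nS sS by simp
        qed
        then obtain u where "u \<in> U" "\<not> k \<le> e u" using U(2) by (meson INF_greatest)
        then have uW: "u \<in> W" and uU: "u \<in> U" using W_def by auto
        have "q \<le> e u" using U(2) uU by (simp add: INF_lower)
        also have "e u \<le> Sup (e ` W)" using uW by (rule SUP_upper)
        finally show "q \<le> Sup (e ` W)" .
      qed
    qed
    then have "k \<le> Sup (e ` W)" using kS by simp
    then have i: "Inf (e ` {c. k \<le> e c}) \<le> Sup (e ` W)" by (simp only: kc[symmetric])
    have t: "top \<in> {c. k \<le> e c}" using e_top by simp
    have m: "\<forall>c d. c\<in>{c. k \<le> e c} \<longrightarrow> d\<in>{c. k \<le> e c} \<longrightarrow> inf c d \<in> {c. k \<le> e c}"
      by (simp add: e_inf)
    obtain c T' where cT: "c \<in> {c. k \<le> e c}" "finite T'" "T' \<subseteq> W" "e c \<le> Sup (e ` T')"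
      using compactF[OF t m i] by blast
    have "k \<le> Sup (e ` T')" using cT(1,4) by (auto intro: order_trans)
    then obtain w where "w \<in> T'" "k \<le> e w" using fin_prime[OF prime nb cT(2)] by blast
    then show False using cT(3) W_def by auto
  qed
qed

lemma L1a:
  assumes "completely_join_irreducible x"
  shows "x = Inf (e ` {a. x \<le> e a})"
proof -
  obtain SS where x: "x = Sup ((\<lambda>S. Inf (e ` S)) ` SS)" using dens1 by blast
  then have "x \<in> (\<lambda>S. Inf (e ` S)) ` SS" using assms unfolding completely_join_irreducible_def by blast
  then obtain S0 where S0: "x = Inf (e ` S0)" by blast
  have "S0 \<subseteq> {a. x \<le> e a}" using S0 by (auto intro: INF_lower)
  then have "Inf (e ` {a. x \<le> e a}) \<le> Inf (e ` S0)" by (rule INF_superset_mono) simp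
  then have "Inf (e ` {a. x \<le> e a}) \<le> x" using S0 by simp
  moreover have "x \<le> Inf (e ` {a. x \<le> e a})" by (auto intro: INF_greatest)
  ultimately show ?thesis by simp
qed

lemma L1b:
  assumes cji: "completely_join_irreducible x" and le: "x \<le> e (sup a b)"
  shows "x \<le> e a \<or> x \<le> e b"
proof -
  define F where "F = {c. x \<le> e c}"
  have xF: "x = Inf (e ` F)" unfolding F_def by (rule L1a[OF cji])
  have topF: "top \<in> F" using F_def e_top by simp
  have meetF: "\<forall>c d. c\<in>F \<longrightarrow> d\<in>F \<longrightarrow> inf c d \<in> F" using F_def by (simp add: e_inf)
  define Fa where "Fa = {d. \<exists>c\<in>F. inf c a \<le> d}"
  define Fb where "Fb = {d. \<exists>c\<in>F. inf c b \<le> d}"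
  have topFa: "top \<in> Fa" using Fa_def topF by auto
  have topFb: "top \<in> Fb" using Fb_def topF by auto
  have meetFa: "\<forall>c d. c\<in>Fa \<longrightarrow> d\<in>Fa \<longrightarrow> inf c d \<in> Fa"
  proof (intro allI impI)
    fix c d assume "c \<in> Fa" "d \<in> Fa"
    then obtain c1 c2 where "c1 \<in> F" "c2 \<in> F" "inf c1 a \<le> c" "inf c2 a \<le> d" using Fa_def by auto
    moreover have h1: "inf (inf c1 c2) a \<le> inf c1 a" "inf (inf c1 c2) a \<le> inf c2 a"
      by (auto intro: le_infI1 le_infI2)
    ultimately have "inf (inf c1 c2) a \<le> c" "inf (inf c1 c2) a \<le> d" "inf c1 c2 \<in> F" using meetF
      by (metis order_trans)+
    then have "inf (inf c1 c2) a \<le> inf c d" "inf c1 c2 \<in> F" by simp_all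
    then show "inf c d \<in> Fa" using Fa_def by blast
  qed
  have meetFb: "\<forall>c d. c\<in>Fb \<longrightarrow> d\<in>Fb \<longrightarrow> inf c d \<in> Fb"
  proof (intro allI impI)
    fix c d assume "c \<in> Fb" "d \<in> Fb"
    then obtain c1 c2 where "c1 \<in> F" "c2 \<in> F" "inf c1 b \<le> c" "inf c2 b \<le> d" using Fb_def by auto
    moreover have h1: "inf (inf c1 c2) b \<le> inf c1 b" "inf (inf c1 c2) b \<le> inf c2 b"
      by (auto intro: le_infI1 le_infI2)
    ultimately have "inf (inf c1 c2) b \<le> c" "inf (inf c1 c2) b \<le> d" "inf c1 c2 \<in> F" using meetF
      by (metis order_trans)+
    then have "inf (inf c1 c2) b \<le> inf c d" "inf c1 c2 \<in> F" by simp_all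
    then show "inf c d \<in> Fb" using Fb_def by blast
  qed
  define ka where "ka = Inf (e ` Fa)"
  define kb where "kb = Inf (e ` Fb)"
  have "F \<subseteq> Fa" using Fa_def by (auto intro: inf.cobounded1)
  then have kax: "ka \<le> x" unfolding ka_def xF by (rule INF_superset_mono) simp
  have "F \<subseteq> Fb" using Fb_def by (auto intro: inf.cobounded1)
  then have kbx: "kb \<le> x" unfolding kb_def xF by (rule INF_superset_mono) simp
  obtain TT where TT: "sup ka kb = Inf ((\<lambda>T. Sup (e ` T)) ` TT)" using dens2 by blast
  have "x \<le> sup ka kb"
    unfolding TT
  proof (rule INF_greatest)
    fix T assume "T \<in> TT"
    then have h: "sup ka kb \<le> Sup (e ` T)" unfolding TT by (rule INF_lower)
    then have "Inf (e ` Fa) \<le> Sup (e ` T)" using ka_def by simp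
    then obtain d1 T1 where d1: "d1 \<in> Fa" "T1 \<subseteq> T" "e d1 \<le> Sup (e ` T1)"
      using compactF[OF topFa meetFa] by blast
    then have d1': "e d1 \<le> Sup (e ` T)" by (meson SUP_subset_mono order_refl order_trans)
    have "Inf (e ` Fb) \<le> Sup (e ` T)" using h kb_def by simp
    then obtain d2 T2 where d2: "d2 \<in> Fb" "T2 \<subseteq> T" "e d2 \<le> Sup (e ` T2)"
      using compactF[OF topFb meetFb] by blast
    then have d2': "e d2 \<le> Sup (e ` T)" by (meson SUP_subset_mono order_refl order_trans)
    obtain c1 where c1: "c1 \<in> F" "inf c1 a \<le> d1" using d1 Fa_def by auto
    obtain c2 where c2: "c2 \<in> F" "inf c2 b \<le> d2" using d2 Fb_def by auto
    have "x \<le> e (inf (inf c1 c2) (sup a b))" using c1 c2 le F_def by (simp add: e_inf)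
    also have "inf (inf c1 c2) (sup a b) \<le> sup d1 d2"
    proof -
      have "inf (inf c1 c2) (sup a b) = sup (inf (inf c1 c2) a) (inf (inf c1 c2) b)"
        by (rule inf_sup_distrib1)
      also have "\<dots> \<le> sup (inf c1 a) (inf c2 b)"
        by (intro sup_mono inf_mono) simp_all
      also have "\<dots> \<le> sup d1 d2" by (rule sup_mono[OF c1(2) c2(2)])
      finally show ?thesis .
    qed
    then have "e (inf (inf c1 c2) (sup a b)) \<le> e (sup d1 d2)" by (rule e_mono)
    also have "e (sup d1 d2) \<le> Sup (e ` T)" using d1' d2' by (simp add: e_sup)
    finally show "x \<le> Sup (e ` T)" .
  qed
  then have "x = sup ka kb" using kax kbx by (simp add: antisym)
  then have "x = Sup {ka, kb}" by simp
  then have "x \<in> {ka, kb}" using cji unfolding completely_join_irreducible_def by blast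
  moreover have "a \<in> Fa" using Fa_def topF by auto
  moreover have "b \<in> Fb" using Fb_def topF by auto
  moreover have "ka \<le> e a" unfolding ka_def using \<open>a \<in> Fa\<close> by (rule INF_lower)
  moreover have "kb \<le> e b" unfolding kb_def using \<open>b \<in> Fb\<close> by (rule INF_lower)
  ultimately show ?thesis by auto
qed

end

lemma dir:
  assumes RA: "residuation_algebra ldiv rdiv" and CE: "canonical_extension e"
  shows "finite T' \<Longrightarrow> T' \<subseteq> {ldiv a b | a b. y \<le> e a \<and> e b \<le> p} \<Longrightarrow>
     \<exists>a b. y \<le> e a \<and> e b \<le> p \<and> (\<forall>t\<in>T'. t \<le> ldiv a b)"
proof (induction T' rule: finite_induct)
  case empty
  have "y \<le> e top" "e bot \<le> p" using e_top[OF CE] e_bot[OF CE] by auto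
  then show ?case by blast
next
  case (insert t F)
  then obtain a b where ab: "y \<le> e a" "e b \<le> p" "\<forall>t\<in>F. t \<le> ldiv a b" by blast
  obtain a1 b1 where t: "t = ldiv a1 b1" "y \<le> e a1" "e b1 \<le> p" using insert(4) by blast
  have "y \<le> e (inf a a1)" using ab t by (simp add: e_inf[OF CE])
  moreover have "e (sup b b1) \<le> p" using ab t by (simp add: e_sup[OF CE])
  moreover have "ldiv a b \<le> ldiv (inf a a1) (sup b b1)"
    by (meson RA inf.cobounded1 order_trans ra_anti1 ra_mono2 sup.cobounded1)
  moreover have "ldiv a1 b1 \<le> ldiv (inf a a1) (sup b b1)"
    by (meson RA inf.cobounded2 order_trans ra_anti1 ra_mono2 sup.cobounded2)
  ultimately have "y \<le> e (inf a a1) \<and> e (sup b b1) \<le> p \<and> (\<forall>t\<in>insert t F. t \<le> ldiv (inf a a1) (sup b b1))"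
    using ab t by (auto intro: order_trans)
  then show ?case by blast
qed

theorem proposition2p5:
  fixes ldiv rdiv :: "'a::{distrib_lattice,bounded_lattice} \<Rightarrow> 'a \<Rightarrow> 'a"
    and e :: "'a \<Rightarrow> 'b::complete_lattice"
    and dot :: "'b \<Rightarrow> 'b \<Rightarrow> 'b"
  assumes RA: "residuation_algebra ldiv rdiv"
    and CE: "canonical_extension e"
    and dist: "\<forall>a b c. ldiv a (sup b c) \<le> sup (ldiv a b) (ldiv a c)"
    and dot_join: "\<forall>u S. dot u (Sup S) = Sup (dot u ` S)"
    and join_dot: "\<forall>v S. dot (Sup S) v = Sup ((\<lambda>u. dot u v) ` S)"
    and adj: "\<forall>u v w. (v \<le> ldiv_pi e ldiv u w \<longleftrightarrow> dot u v \<le> w)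
                   \<and> (dot u v \<le> w \<longleftrightarrow> u \<le> rdiv_pi e rdiv w v)"
  shows "\<forall>y z. completely_join_irreducible y \<and> completely_join_irreducible z \<longrightarrow>
           completely_join_irreducible (dot y z) \<or> dot y z = bot"
proof (intro allI impI)
  fix y z :: 'b assume yz: "completely_join_irreducible y \<and> completely_join_irreducible z"
  then have cy: "completely_join_irreducible y" and cz: "completely_join_irreducible z" by auto
  define k where "k = dot y z"
  show "completely_join_irreducible (dot y z) \<or> dot y z = bot"
  proof (cases "k = bot")
    case True then show ?thesis using k_def by simp
  next
    case nb: False
    have yc: "y = Inf (e ` {a. y \<le> e a})" using L1a[OF CE cy] .
    have zc: "z = Inf (e ` {a. z \<le> e a})" using L1a[OF CE cz] .
    have ycl: "y \<in> closed_elems e" unfolding closed_elems_def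
      by (intro CollectI exI conjI TrueI) (rule yc)
    have adj1: "\<And>u v w. v \<le> ldiv_pi e ldiv u w \<longleftrightarrow> dot u v \<le> w" using adj by blast
    have conv: "\<And>a b. y \<le> e a \<Longrightarrow> z \<le> e (ldiv a b) \<Longrightarrow> k \<le> e b"
    proof -
      fix a b assume a: "y \<le> e a" and zab: "z \<le> e (ldiv a b)"
      have "z \<le> ldiv_pi e ldiv y (e b)"
        unfolding ldiv_pi_def
      proof (rule Inf_greatest)
        fix w assume "w \<in> {ldiv_KO e ldiv k p |k p.
          k \<in> closed_elems e \<and> p \<in> open_elems e \<and> k \<le> y \<and> e b \<le> p}"
        then obtain k' p where kp: "w = ldiv_KO e ldiv k' p" "k' \<le> y" "e b \<le> p" by blast
        have "k' \<le> e a" using kp(2) a by (rule order_trans)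
        then have "e (ldiv a b) \<le> w" unfolding kp ldiv_KO_def
          using kp(3) by (intro Sup_upper) blast
        then show "z \<le> w" using zab by simp
      qed
      then show "k \<le> e b" unfolding k_def by (simp only: adj1)
    qed
    have fwd: "\<And>P. k \<le> Sup (e ` P) \<Longrightarrow> \<exists>a b. y \<le> e a \<and> z \<le> e (ldiv a b) \<and> e b \<le> Sup (e ` P)"
    proof -
      fix P assume kP: "k \<le> Sup (e ` P)"
      define p where "p = Sup (e ` P)"
      have "z \<le> ldiv_pi e ldiv y p" using kP unfolding k_def p_def by (simp only: adj1)
      also have "ldiv_pi e ldiv y p \<le> ldiv_KO e ldiv y p"
        unfolding ldiv_pi_def
      proof (rule Inf_lower)
        have "p \<in> open_elems e" unfolding open_elems_def p_def by blast
        then show "ldiv_KO e ldiv y p \<in> {ldiv_KO e ldiv k p' |k p'.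
          k \<in> closed_elems e \<and> p' \<in> open_elems e \<and> k \<le> y \<and> p \<le> p'}" using ycl by blast
      qed
      also have "ldiv_KO e ldiv y p = Sup (e ` {ldiv a b | a b. y \<le> e a \<and> e b \<le> p})"
        unfolding ldiv_KO_def by (rule arg_cong[where f=Sup]) blast
      finally have "z \<le> Sup (e ` {ldiv a b | a b. y \<le> e a \<and> e b \<le> p})" .
      then have i: "Inf (e ` {a. z \<le> e a}) \<le> Sup (e ` {ldiv a b | a b. y \<le> e a \<and> e b \<le> p})"
        by (simp only: zc[symmetric])
      have t: "top \<in> {a. z \<le> e a}" using e_top[OF CE] by simp
      have m: "\<forall>c d. c\<in>{a. z \<le> e a} \<longrightarrow> d\<in>{a. z \<le> e a} \<longrightarrow> inf c d \<in> {a. z \<le> e a}"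
        by (simp add: e_inf[OF CE])
      obtain c T' where cT0: "c \<in> {a. z \<le> e a}" "finite T'"
        "T' \<subseteq> {ldiv a b | a b. y \<le> e a \<and> e b \<le> p}" "e c \<le> Sup (e ` T')"
        using compactF[OF CE t m i] by blast
      have cT: "z \<le> e c" "finite T'"
        "T' \<subseteq> {ldiv a b | a b. y \<le> e a \<and> e b \<le> p}" "e c \<le> Sup (e ` T')"
        using cT0 by auto
      obtain a b where ab: "y \<le> e a" "e b \<le> p" "\<forall>t\<in>T'. t \<le> ldiv a b"
        using dir[OF RA CE cT(2,3)] by blast
      have "Sup (e ` T') \<le> e (ldiv a b)" using ab(3) e_mono[OF CE] by (auto intro: SUP_least)
      then have "z \<le> e (ldiv a b)" using cT by (meson order_trans)
      then show "\<exists>a b. y \<le> e a \<and> z \<le> e (ldiv a b) \<and> e b \<le> Sup (e ` P)" using ab p_def by blast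
    qed
    have kc: "k = Inf (e ` {c. k \<le> e c})"
    proof (rule antisym)
      show "k \<le> Inf (e ` {c. k \<le> e c})" by (auto intro: INF_greatest)
      obtain TT where TT: "k = Inf ((\<lambda>T. Sup (e ` T)) ` TT)" using dens2[OF CE] by blast
      show "Inf (e ` {c. k \<le> e c}) \<le> k"
      proof -
       have "Inf (e ` {c. k \<le> e c}) \<le> Inf ((\<lambda>T. Sup (e ` T)) ` TT)"
       proof (rule INF_greatest)
        fix T assume "T \<in> TT"
        then have "Inf ((\<lambda>T. Sup (e ` T)) ` TT) \<le> Sup (e ` T)" by (rule INF_lower)
        then have "k \<le> Sup (e ` T)" using TT by simp
        then obtain a b where ab: "y \<le> e a" "z \<le> e (ldiv a b)" "e b \<le> Sup (e ` T)" using fwd by blast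
        then have "k \<le> e b" using conv by blast
        then have "Inf (e ` {c. k \<le> e c}) \<le> e b" by (auto intro: INF_lower)
        then show "Inf (e ` {c. k \<le> e c}) \<le> Sup (e ` T)" using ab(3) by (rule order_trans)
       qed
       then show ?thesis using TT[symmetric] by (simp only:)
      qed
    qed
    have prime: "\<forall>c d. k \<le> e (sup c d) \<longrightarrow> k \<le> e c \<or> k \<le> e d"
    proof (intro allI impI)
      fix c d assume "k \<le> e (sup c d)"
      then have "k \<le> Sup (e ` {sup c d})" by simp
      then obtain a b where ab: "y \<le> e a" "z \<le> e (ldiv a b)" "e b \<le> Sup (e ` {sup c d})"
        using fwd by blast
      then have "b \<le> sup c d" using e_refl[OF CE] by simp
      then have "ldiv a b \<le> sup (ldiv a c) (ldiv a d)" using ra_mono2[OF RA] dist by (meson order_trans)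
      then have "z \<le> e (sup (ldiv a c) (ldiv a d))" using ab(2) e_mono[OF CE] by (meson order_trans)
      then have "z \<le> e (ldiv a c) \<or> z \<le> e (ldiv a d)" using L1b[OF CE cz] by blast
      then show "k \<le> e c \<or> k \<le> e d" using conv ab(1) by blast
    qed
    show ?thesis using L2[OF CE kc prime nb] k_def by simp
  qed
qed

end
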